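(* For the matching model described in the context, provided the normalising sum is finite, the stationary distribution of the token state descriptor is $$\pi((T_1,n_1,\dots,T_i,n_i))=\pi((0))\prod_{j=1}^i\frac{\lambda_{T_j}}{A(j)\sum_{m=1}^j\lambda_{T_m}}\Big(\frac{\sum_{m=1}^j\lambda_{T_m}}{F_j(T_1,\dots,T_j)}\Big)^{n_j+1}\prod_{m=1}^{\sum_{l=1}^i n_l}\frac1{A(i+m)},$$ for all $i$, distinct $T_1,\dots,T_i$ and $n_j\in\mathbb N_0$, with $\pi((0))$ the normalising constant.
   Context: Parallel FCFS matching model: customer types $c_1,\dots,c_K$, type $c_l$ arriving as an independent Poisson process with rate $\lambda_{t_l}>0$; a finite set of server types, each compatible with some customer types. When $n$ customers are waiting, servers of each server type arrive (independently) at rate $A(n)>0$ ($n\ge1$). An arriving server is matched with the longest-waiting compatible customer, and both leave; if none, the server leaves immediately. Token representation: token $t_l$ corresponds to type $c_l$ and is held by the oldest type-$c_l$ customer waiting. State: $(0)$ or $(T_1,n_1,\dots,T_i,n_i)$ with $T_1,\dots,T_i$ the distinct held tokens ordered by arrival of their holders and $n_j$ the number of non-holding customers arriving between holders of $T_j$ and $T_{j+1}$ (after the holder of $T_i$ for $j=i$). $F_j(T_1,\dots,T_j)$ denotes the number of server types compatible with at least one of the customer types corresponding to $T_1,\dots,T_j$, assumed positive for nonempty tuples. *)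

theory Defs
  imports "HOL-Analysis.Analysis"
begin

text \<open>Customer types are the naturals below K (type c_l is l); server types are
  the elements of a finite set S of an arbitrary type; cp s c means server
  type s can serve customer type c.  A customer-level state is the list of the
  types of the waiting customers in order of arrival (oldest first).\<close>

definition serve :: "('s \<Rightarrow> nat \<Rightarrow> bool) \<Rightarrow> 's \<Rightarrow> nat list \<Rightarrow> nat list option" where
  "serve cp s xs =
     (let pre = takeWhile (\<lambda>c. \<not> cp s c) xs;
          rest = dropWhile (\<lambda>c. \<not> cp s c) xs
      in if rest = [] then None else Some (pre @ tl rest))"

text \<open>Global balance equations of the customer-level continuous-time Markov
  chain on lists over {..<K}: arrivals of type c at rate lam c (appended at the
  end); each server type arrives at rate A n when n customers wait.
  Outflow of x = inflow into x (self-loops, i.e. servers finding no compatible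
  customer, do not change the state and are omitted on both sides).\<close>
definition balance_holds ::
  "nat \<Rightarrow> (nat \<Rightarrow> real) \<Rightarrow> (nat \<Rightarrow> real) \<Rightarrow> 's set \<Rightarrow> ('s \<Rightarrow> nat \<Rightarrow> bool)
   \<Rightarrow> (nat list \<Rightarrow> real) \<Rightarrow> bool" where
  "balance_holds K lam A S cp p \<longleftrightarrow>
    (\<forall>x \<in> lists {..<K}.
       p x * ((\<Sum>c<K. lam c) + A (length x) * real (card {s \<in> S. serve cp s x \<noteq> None}))
       = (if x = [] then 0 else p (butlast x) * lam (last x))
         + (\<Sum>y \<in> {y \<in> lists {..<K}. length y = Suc (length x)}.
              p y * A (length y) * real (card {s \<in> S. serve cp s y = Some x})))"

definition stationary_dist ::
  "nat \<Rightarrow> (nat \<Rightarrow> real) \<Rightarrow> (nat \<Rightarrow> real) \<Rightarrow> 's set \<Rightarrow> ('s \<Rightarrow> nat \<Rightarrow> bool)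
   \<Rightarrow> (nat list \<Rightarrow> real) \<Rightarrow> bool" where
  "stationary_dist K lam A S cp p \<longleftrightarrow>
    (\<forall>x \<in> lists {..<K}. 0 \<le> p x) \<and> p summable_on (lists {..<K})
    \<and> infsum p (lists {..<K}) = 1 \<and> balance_holds K lam A S cp p"

text \<open>Token state descriptor: list of pairs (T_j, n_j); the empty list is the
  state (0).  Built by scanning the queue from oldest to youngest: a customer
  whose type has no token yet becomes the holder of a new token; otherwise it is a
  non-holding customer counted in the block of the most recent holder.\<close>
definition tok_step :: "(nat \<times> nat) list \<Rightarrow> nat \<Rightarrow> (nat \<times> nat) list" where
  "tok_step acc c =
     (if c \<in> fst ` set acc then butlast acc @ [(fst (last acc), Suc (snd (last acc)))]
      else acc @ [(c, 0)])"

definition token_state :: "nat list \<Rightarrow> (nat \<times> nat) list" where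
  "token_state xs = foldl tok_step [] xs"

definition token_states :: "nat \<Rightarrow> (nat \<times> nat) list set" where
  "token_states K = {ts. distinct (map fst ts) \<and> set (map fst ts) \<subseteq> {..<K}}"

definition Fnum :: "'s set \<Rightarrow> ('s \<Rightarrow> nat \<Rightarrow> bool) \<Rightarrow> nat list \<Rightarrow> nat" where
  "Fnum S cp Ts = card {s \<in> S. \<exists>T \<in> set Ts. cp s T}"

definition Lam :: "(nat \<Rightarrow> real) \<Rightarrow> (nat \<times> nat) list \<Rightarrow> nat \<Rightarrow> real" where
  "Lam lam ts j = (\<Sum>m<j. lam (fst (ts ! m)))"

text \<open>Unnormalised product-form weight (pi(ts)/pi((0))).\<close>
definition weight ::
  "(nat \<Rightarrow> real) \<Rightarrow> (nat \<Rightarrow> real) \<Rightarrow> 's set \<Rightarrow> ('s \<Rightarrow> nat \<Rightarrow> bool)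
   \<Rightarrow> (nat \<times> nat) list \<Rightarrow> real" where
  "weight lam A S cp ts =
     (\<Prod>j\<in>{1..length ts}.
        lam (fst (ts ! (j - 1))) / (A j * Lam lam ts j)
        * (Lam lam ts j / real (Fnum S cp (map fst (take j ts)))) ^ (snd (ts ! (j - 1)) + 1))
     * (\<Prod>m\<in>{1..sum_list (map snd ts)}. 1 / A (length ts + m))"

end

theory Submission
  imports Defs
begin


locale mm =
  fixes K :: nat and lam :: "nat \<Rightarrow> real" and A :: "nat \<Rightarrow> real"
    and S :: "'s set" and cp :: "'s \<Rightarrow> nat \<Rightarrow> bool"
  assumes finS: "finite S"
    and lam_pos: "\<forall>c<K. lam c > 0"
    and A_pos: "\<forall>n\<ge>1. A n > 0"
    and F_pos: "\<forall>Ts. Ts \<noteq> [] \<and> set Ts \<subseteq> {..<K} \<longrightarrow> Fnum S cp Ts > 0"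
begin

abbreviation FF :: "nat list \<Rightarrow> real" where "FF xs \<equiv> real (Fnum S cp xs)"

definition Q1 :: "nat list \<Rightarrow> real" where
  "Q1 xs = (\<Prod>i<length xs. lam (xs!i) / FF (take (Suc i) xs))"

definition Ap :: "nat \<Rightarrow> real" where "Ap n = (\<Prod>k\<in>{1..n}. 1 / A k)"

definition qq :: "nat list \<Rightarrow> real" where "qq xs = Q1 xs * Ap (length xs)"

lemma Fnum_set: "set a = set b \<Longrightarrow> Fnum S cp a = Fnum S cp b"
  by (simp add: Fnum_def)

lemma Fnum_Nil[simp]: "Fnum S cp [] = 0"
  by (simp add: Fnum_def)

lemma FF_pos: "xs \<noteq> [] \<Longrightarrow> set xs \<subseteq> {..<K} \<Longrightarrow> FF xs > 0"
  using F_pos by auto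

lemma Q1_Nil[simp]: "Q1 [] = 1" by (simp add: Q1_def)

lemma Q1_snoc: "Q1 (xs @ [c]) = Q1 xs * lam c / FF (xs @ [c])"
proof -
  have "Q1 (xs @ [c]) = (\<Prod>i<length xs. lam ((xs@[c])!i) / FF (take (Suc i) (xs@[c])))
        * (lam c / FF (xs @ [c]))"
    by (simp add: Q1_def)
  also have "(\<Prod>i<length xs. lam ((xs@[c])!i) / FF (take (Suc i) (xs@[c]))) = Q1 xs"
    unfolding Q1_def by (intro prod.cong) (auto simp: nth_append)
  finally show ?thesis by simp
qed

lemma Ap_0[simp]: "Ap 0 = 1" by (simp add: Ap_def)

lemma Ap_Suc: "Ap (Suc n) = Ap n / A (Suc n)"
  by (simp add: Ap_def prod.cl_ivl_Suc)

lemma Ap_pos: "Ap n > 0"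
  using A_pos unfolding Ap_def by (intro prod_pos) auto

lemma qq_Nil[simp]: "qq [] = 1" by (simp add: qq_def)

lemma qq_snoc: "qq (xs @ [c]) = qq xs * lam c / (A (Suc (length xs)) * FF (xs @ [c]))"
  by (simp add: qq_def Q1_snoc Ap_Suc field_simps)

lemma Q1_nonneg: "set xs \<subseteq> {..<K} \<Longrightarrow> Q1 xs \<ge> 0"
  unfolding Q1_def using lam_pos
  by (intro prod_nonneg divide_nonneg_nonneg) (auto simp: subset_iff less_imp_le)

lemma qq_nonneg: "set xs \<subseteq> {..<K} \<Longrightarrow> qq xs \<ge> 0"
  using Q1_nonneg Ap_pos by (simp add: qq_def less_imp_le)

lemma serve_None: "serve cp s x \<noteq> None \<longleftrightarrow> (\<exists>c\<in>set x. cp s c)"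
  by (simp add: serve_def Let_def dropWhile_eq_Nil_conv)

lemma card_serve: "card {s \<in> S. serve cp s x \<noteq> None} = Fnum S cp x"
  using serve_None[of s x for s] by (simp add: Fnum_def)

definition ins :: "nat \<Rightarrow> nat \<Rightarrow> nat list \<Rightarrow> nat list" where
  "ins k c x = take k x @ c # drop k x"

lemma tele:
  assumes "set x \<subseteq> {..<K}" "c < K"
  shows "A (Suc (length x)) * (\<Sum>k\<le>length x. qq (ins k c x) * (FF (take k x @ [c]) - FF (take k x)))
         = lam c * qq x"
  using assms(1)
proof (induction x rule: rev_induct)
  case Nil
  have "FF [c] > 0" using FF_pos assms by auto
  moreover have "A 1 > 0" using A_pos by auto
  ultimately show ?case
    by (simp add: ins_def qq_snoc[of "[]", simplified])
next
  case (snoc d x)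
  define n where "n = length x"
  define Fc where "Fc = FF (x @ [d] @ [c])"
  define Fx where "Fx = FF (x @ [d])"
  have d: "d < K" using snoc.prems by auto
  have Fc: "Fc > 0" unfolding Fc_def using FF_pos snoc.prems assms by auto
  have Fx: "Fx > 0" unfolding Fx_def using FF_pos snoc.prems by auto
  have A1: "A (Suc n) > 0" "A (Suc (Suc n)) > 0" using A_pos by auto
  have IH: "A (Suc n) * (\<Sum>k\<le>n. qq (ins k c x) * (FF (take k x @ [c]) - FF (take k x))) = lam c * qq x"
    using snoc by (simp add: n_def)
  have tm: "qq (ins k c (x@[d])) * (FF (take k (x@[d]) @ [c]) - FF (take k (x@[d])))
      = qq (ins k c x) * (FF (take k x @ [c]) - FF (take k x)) * (lam d / (A (Suc (Suc n)) * Fc))"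
    if "k \<le> n" for k
  proof -
    have i: "ins k c (x@[d]) = ins k c x @ [d]" using that by (simp add: ins_def n_def)
    have "FF (ins k c x @ [d]) = Fc" unfolding Fc_def
      by (rule arg_cong[where f=real], rule Fnum_set) (auto simp: ins_def dest: in_set_takeD in_set_dropD,
          metis append_take_drop_id Un_iff set_append)
    moreover have "length (ins k c x) = Suc n" using that by (simp add: ins_def n_def)
    ultimately show ?thesis using that by (simp add: i qq_snoc n_def)
  qed
  have last: "ins (Suc n) c (x@[d]) = (x@[d]) @ [c]" by (simp add: ins_def n_def)
  have "A (Suc (Suc n)) * (\<Sum>k\<le>Suc n. qq (ins k c (x@[d])) * (FF (take k (x@[d]) @ [c]) - FF (take k (x@[d]))))
     = A (Suc (Suc n)) * ((\<Sum>k\<le>n. qq (ins k c x) * (FF (take k x @ [c]) - FF (take k x))) * (lam d / (A (Suc (Suc n)) * Fc))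
        + qq ((x@[d]) @ [c]) * (Fc - Fx))"
  proof -
    have "(\<Sum>k\<le>n. qq (ins k c (x@[d])) * (FF (take k (x@[d]) @ [c]) - FF (take k (x@[d]))))
       = (\<Sum>k\<le>n. qq (ins k c x) * (FF (take k x @ [c]) - FF (take k x)) * (lam d / (A (Suc (Suc n)) * Fc)))"
      by (rule sum.cong) (auto simp only: tm)
    then show ?thesis
      by (simp only: sum.atMost_Suc last sum_distrib_right) (simp add: n_def Fc_def Fx_def)
  qed
  also have "\<dots> = lam c * qq (x @ [d])"
  proof -
    define \<Sigma> where "\<Sigma> = (\<Sum>k\<le>n. qq (ins k c x) * (FF (take k x @ [c]) - FF (take k x)))"
    have IH': "\<Sigma> = lam c * qq x / A (Suc n)" using IH A1 unfolding \<Sigma>_def by (simp add: field_simps)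
    have q1: "qq ((x@[d]) @ [c]) = qq (x@[d]) * lam c / (A (Suc (Suc n)) * Fc)"
      using qq_snoc[of "x@[d]" c] by (simp add: n_def Fc_def)
    have q2: "qq (x@[d]) = qq x * lam d / (A (Suc n) * Fx)"
      using qq_snoc[of x d] by (simp add: n_def Fx_def)
    show ?thesis unfolding \<Sigma>_def[symmetric] IH' q1 q2 using Fc Fx A1
      by (simp add: field_simps)
  qed
  finally show ?case by (simp add: n_def)
qed

end


context mm begin

lemma serve_ins:
  assumes "cp s c" "\<forall>c'\<in>set (take k x). \<not> cp s c'"
  shows "takeWhile (\<lambda>c. \<not> cp s c) (ins k c x) = take k x"
    "dropWhile (\<lambda>c. \<not> cp s c) (ins k c x) = c # drop k x"
    "serve cp s (ins k c x) = Some x"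
  using assms by (simp_all add: ins_def takeWhile_append2 dropWhile_append2 serve_def Let_def)

lemma serve_inv:
  assumes "serve cp s y = Some x"
  defines "pre \<equiv> takeWhile (\<lambda>c. \<not> cp s c) y" and "rest \<equiv> dropWhile (\<lambda>c. \<not> cp s c) y"
  shows "rest \<noteq> []" "x = pre @ tl rest" "ins (length pre) (hd rest) x = y"
    "cp s (hd rest)" "\<forall>c'\<in>set (take (length pre) x). \<not> cp s c'" "hd rest \<in> set y"
    "length pre \<le> length x"
proof -
  show r: "rest \<noteq> []" using assms by (auto simp: serve_def Let_def split: if_splits)
  show x: "x = pre @ tl rest" using assms by (auto simp: serve_def Let_def split: if_splits)
  show "ins (length pre) (hd rest) x = y" using r unfolding x ins_def
    by (simp add: pre_def rest_def)
  show "cp s (hd rest)" using r unfolding rest_def using hd_dropWhile by blast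
  show "\<forall>c'\<in>set (take (length pre) x). \<not> cp s c'" unfolding x pre_def
    by (auto dest: set_takeWhileD)
  show "hd rest \<in> set y" using r unfolding rest_def by (meson hd_in_set set_dropWhileD)
  show "length pre \<le> length x" unfolding x by simp
qed

lemma inflow:
  assumes x: "set x \<subseteq> {..<K}"
  shows "(\<Sum>y \<in> {y \<in> lists {..<K}. length y = Suc (length x)}.
              qq y * A (length y) * real (card {s \<in> S. serve cp s y = Some x}))
    = A (Suc (length x)) * (\<Sum>c<K. \<Sum>k\<le>length x. qq (ins k c x) * (FF (take k x @ [c]) - FF (take k x)))"
proof -
  define n where "n = length x"
  define Y where "Y = {y \<in> lists {..<K}. length y = Suc n}"
  define B where "B = (\<lambda>y. {s \<in> S. serve cp s y = Some x})"
  define G where "G = (\<lambda>l. {s \<in> S. \<exists>T\<in>set l. cp s T})"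
  define Q where "Q = (\<lambda>(c,k). G (take k x @ [c]) - G (take k x))"
  have finY: "finite Y"
    by (rule finite_subset[OF _ finite_lists_length_eq[of "{..<K}" "Suc n"]]) (auto simp: Y_def)
  have finB: "finite (B y)" for y using finS by (simp add: B_def)
  have "(\<Sum>y \<in> Y. qq y * A (length y) * real (card (B y))) = (\<Sum>y\<in>Y. \<Sum>s\<in>B y. qq y * A (Suc n))"
    by (rule sum.cong) (auto simp: Y_def)
  also have "\<dots> = (\<Sum>(y,s)\<in>Sigma Y B. qq y * A (Suc n))"
    using finY finB by (subst sum.Sigma) auto
  also have "\<dots> = (\<Sum>((c,k),s)\<in>Sigma ({..<K} \<times> {..n}) Q. qq (ins k c x) * A (Suc n))"
  proof -
    define fi where "fi = (\<lambda>(y::nat list,s::'s). ((hd (dropWhile (\<lambda>c. \<not> cp s c) y), length (takeWhile (\<lambda>c. \<not> cp s c) y)), s))"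
    define fj where "fj = (\<lambda>((c::nat,k::nat),s::'s). (ins k c x, s))"
    have h1: "fj (fi b) = b \<and> fi b \<in> Sigma ({..<K} \<times> {..n}) Q" if b: "b \<in> Sigma Y B" for b
    proof -
      obtain y s where [simp]: "b = (y,s)" and y: "y \<in> Y" and s: "s \<in> S" "serve cp s y = Some x"
        using b by (auto simp: B_def)
      note si = serve_inv[OF s(2)]
      have e: "fi b = ((hd (dropWhile (\<lambda>c. \<not> cp s c) y), length (takeWhile (\<lambda>c. \<not> cp s c) y)), s)"
        by (simp add: fi_def)
      have "hd (dropWhile (\<lambda>c. \<not> cp s c) y) < K" using si(6) y by (auto simp: Y_def)
      moreover have "length (takeWhile (\<lambda>c. \<not> cp s c) y) \<le> n" using si(7) by (simp add: n_def)
      moreover have "s \<in> Q (hd (dropWhile (\<lambda>c. \<not> cp s c) y), length (takeWhile (\<lambda>c. \<not> cp s c) y))"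
      proof -
        define c0 where "c0 = hd (dropWhile (\<lambda>c. \<not> cp s c) y)"
        define k0 where "k0 = length (takeWhile (\<lambda>c. \<not> cp s c) y)"
        have 1: "cp s c0" "\<forall>c'\<in>set (take k0 x). \<not> cp s c'" unfolding c0_def k0_def by (rule si(4), rule si(5))
        have "s \<in> G (take k0 x @ [c0])" using 1 s(1) unfolding G_def by auto
        moreover have "s \<notin> G (take k0 x)" using 1 unfolding G_def by auto
        ultimately have "s \<in> Q (c0, k0)" unfolding Q_def by simp
        then show ?thesis by (simp add: c0_def k0_def)
      qed
      ultimately show ?thesis unfolding e using si(3) by (simp only: fj_def prod.case mem_Sigma_iff mem_Times_iff lessThan_iff atMost_iff fst_conv snd_conv) simp
    qed
    have h2: "fi (fj a) = a \<and> fj a \<in> Sigma Y B" if a: "a \<in> Sigma ({..<K} \<times> {..n}) Q" for a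
    proof -
      obtain c k s where [simp]: "a = ((c,k),s)" by (metis prod.exhaust)
      have c: "c < K" and k: "k \<le> n" using a by auto
      have sG: "s \<in> G (take k x @ [c])" "s \<notin> G (take k x)" using a by (auto simp: Q_def)
      have s: "s \<in> S" "cp s c" "\<forall>c'\<in>set (take k x). \<not> cp s c'"
        using sG by (auto simp: G_def)
      note si = serve_ins[OF s(2,3)]
      have "fi (fj a) = a" using si k by (simp add: n_def min_def fi_def fj_def)
      moreover have "fj a \<in> Sigma Y B"
        using si k c x s(1) by (auto simp: Y_def B_def ins_def n_def fj_def dest: in_set_takeD in_set_dropD)
      ultimately show ?thesis by simp
    qed
    have h3: "qq (fst b) * A (Suc n) = (case fi b of ((c, k), s) \<Rightarrow> qq (ins k c x) * A (Suc n))"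
      if b: "b \<in> Sigma Y B" for b
    proof -
      have "fst (fj (fi b)) = fst b" using h1[OF b] by simp
      then show ?thesis by (cases "fi b") (auto simp: fj_def)
    qed
    show ?thesis
      apply (rule sum.reindex_bij_witness[where j = fi and i = fj])
      using h1 apply blast
      using h1 apply blast
      using h2 apply blast
      using h2 apply blast
      subgoal premises p for a using h3[OF p] by (cases a) (auto simp add: split_def)
      done
  qed
  also have "\<dots> = (\<Sum>(c,k)\<in>{..<K} \<times> {..n}. \<Sum>s\<in>Q (c,k). qq (ins k c x) * A (Suc n))"
  proof -
    have "\<forall>z\<in>{..<K} \<times> {..n}. finite (Q z)" using finS by (auto simp: Q_def G_def)
    from sum.Sigma[OF _ this, of "\<lambda>(c,k) s. qq (ins k c x) * A (Suc n)"]
    show ?thesis by (simp add: split_def)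
  qed
  also have "\<dots> = (\<Sum>(c,k)\<in>{..<K} \<times> {..n}. qq (ins k c x) * (FF (take k x @ [c]) - FF (take k x)) * A (Suc n))"
  proof (rule sum.cong, simp, clarify)
    fix c k
    have sub: "G (take k x) \<subseteq> G (take k x @ [c])" by (auto simp: G_def)
    have "card (Q (c,k)) = card (G (take k x @ [c])) - card (G (take k x))"
      unfolding Q_def using sub finS by (simp add: card_Diff_subset G_def)
    moreover have "card (G (take k x)) \<le> card (G (take k x @ [c]))"
      using sub finS by (intro card_mono) (auto simp: G_def)
    ultimately have "real (card (Q (c,k))) = FF (take k x @ [c]) - FF (take k x)"
      by (simp add: of_nat_diff Fnum_def G_def)
    then show "(\<Sum>s\<in>Q (c, k). qq (ins k c x) * A (Suc n)) =
          qq (ins k c x) * (FF (take k x @ [c]) - FF (take k x)) * A (Suc n)"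
      by simp
  qed
  also have "\<dots> = A (Suc n) * (\<Sum>c<K. \<Sum>k\<le>n. qq (ins k c x) * (FF (take k x @ [c]) - FF (take k x)))"
    by (simp add: sum.cartesian_product[symmetric] sum_distrib_left mult_ac)
  finally show ?thesis by (simp add: Y_def B_def n_def)
qed

lemma balance_qq:
  assumes x: "set x \<subseteq> {..<K}"
  shows "qq x * ((\<Sum>c<K. lam c) + A (length x) * real (card {s \<in> S. serve cp s x \<noteq> None}))
       = (if x = [] then 0 else qq (butlast x) * lam (last x))
         + (\<Sum>y \<in> {y \<in> lists {..<K}. length y = Suc (length x)}.
              qq y * A (length y) * real (card {s \<in> S. serve cp s y = Some x}))"
proof -
  have infl: "(\<Sum>y \<in> {y \<in> lists {..<K}. length y = Suc (length x)}.
              qq y * A (length y) * real (card {s \<in> S. serve cp s y = Some x}))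
        = (\<Sum>c<K. lam c) * qq x"
  proof -
    have "(\<Sum>c<K. A (Suc (length x)) * (\<Sum>k\<le>length x. qq (ins k c x) * (FF (take k x @ [c]) - FF (take k x))))
        = (\<Sum>c<K. lam c * qq x)"
      by (rule sum.cong) (simp_all add: tele[OF x])
    then show ?thesis unfolding inflow[OF x] sum_distrib_left sum_distrib_right by simp
  qed
  have arr: "(if x = [] then 0 else qq (butlast x) * lam (last x)) = qq x * A (length x) * FF x"
  proof (cases "x = []")
    case False
    then have xe: "x = butlast x @ [last x]" by simp
    have "FF x > 0" using FF_pos False x by auto
    moreover have "A (length x) > 0" using A_pos False by (simp add: Suc_le_eq)
    moreover have "qq x = qq (butlast x) * lam (last x) / (A (length x) * FF x)"
      using qq_snoc[of "butlast x" "last x"] xe[symmetric] False by simp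
    ultimately show ?thesis using False by simp
  qed simp
  show ?thesis unfolding infl arr card_serve by (simp add: algebra_simps)
qed

end



lemma ts_snoc: "token_state (xs @ [c]) = tok_step (token_state xs) c"
  by (simp add: token_state_def)

lemma ts_Nil[simp]: "token_state [] = []" by (simp add: token_state_def)

lemma tok_step_in:
  "c \<in> fst ` set acc \<Longrightarrow> fst ` set (tok_step acc c) = fst ` set acc
    \<and> map fst (tok_step acc c) = map fst acc"
proof -
  assume c: "c \<in> fst ` set acc"
  then have ne: "acc \<noteq> []" by auto
  have e: "acc = butlast acc @ [last acc]" using ne by simp
  have "map fst (tok_step acc c) = map fst (butlast acc) @ [fst (last acc)]"
    using c by (simp add: tok_step_def)
  also have "\<dots> = map fst acc" by (subst (2) e) simp
  finally show ?thesis by (metis list.set_map)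
qed

lemma ts_set: "fst ` set (token_state xs) = set xs"
proof (induction xs rule: rev_induct)
  case (snoc c xs)
  show ?case
  proof (cases "c \<in> fst ` set (token_state xs)")
    case True then show ?thesis using tok_step_in[OF True] snoc by (auto simp: ts_snoc)
  next
    case False then show ?thesis using snoc by (auto simp: ts_snoc tok_step_def)
  qed
qed simp

lemma ts_distinct: "distinct (map fst (token_state xs))"
proof (induction xs rule: rev_induct)
  case (snoc c xs)
  show ?case
  proof (cases "c \<in> fst ` set (token_state xs)")
    case True then show ?thesis using tok_step_in[OF True] snoc by (auto simp: ts_snoc)
  next
    case False then show ?thesis using snoc by (auto simp: ts_snoc tok_step_def)
  qed
qed simp

lemma ts_len: "length xs = length (token_state xs) + sum_list (map snd (token_state xs))"
proof (induction xs rule: rev_induct)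
  case (snoc c xs)
  show ?case
  proof (cases "c \<in> fst ` set (token_state xs)")
    case True
    define acc where "acc = token_state xs"
    have ne: "acc \<noteq> []" using True by (auto simp: acc_def)
    have e: "acc = butlast acc @ [last acc]" using ne by simp
    have "sum_list (map snd acc) = sum_list (map snd (butlast acc)) + snd (last acc)"
      by (subst e) simp
    moreover have "length acc = Suc (length (butlast acc))" using ne by simp
    ultimately show ?thesis using True snoc
      by (simp add: ts_snoc tok_step_def acc_def[symmetric])
  next
    case False then show ?thesis using snoc by (auto simp: ts_snoc tok_step_def)
  qed
qed simp

lemma ts_Nil_iff: "token_state xs = [] \<longleftrightarrow> xs = []"
  using ts_set[of xs] by auto

lemma Lam_snoc: "j \<le> length ts \<Longrightarrow> Lam lam (ts @ [p]) j = Lam lam ts j"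
  unfolding Lam_def by (intro sum.cong) (auto simp: nth_append)

lemma Lam_full: "Lam lam (ts @ [p]) (Suc (length ts)) = Lam lam ts (length ts) + lam (fst p)"
  by (simp add: Lam_def nth_append)

lemma Lam_set: "distinct (map fst ts) \<Longrightarrow> Lam lam ts (length ts) = (\<Sum>c\<in>fst ` set ts. lam c)"
proof (induction ts rule: rev_induct)
  case Nil then show ?case by (simp add: Lam_def)
next
  case (snoc p ts)
  have "Lam lam (ts @ [p]) (length (ts @ [p])) = Lam lam ts (length ts) + lam (fst p)"
    using Lam_full by simp
  moreover have "fst p \<notin> fst ` set ts" using snoc.prems by auto
  ultimately show ?case using snoc by (simp add: add.commute)
qed



context mm begin

definition fib :: "(nat \<times> nat) list \<Rightarrow> nat list set" where
  "fib ts = {xs \<in> lists {..<K}. token_state xs = ts}"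

definition W1 :: "(nat \<times> nat) list \<Rightarrow> real" where
  "W1 ts = (\<Prod>j<length ts. lam (fst (ts!j)) / Lam lam ts (Suc j)
        * (Lam lam ts (Suc j) / FF (map fst (take (Suc j) ts))) ^ (snd (ts!j) + 1))"

lemma W1_snoc: "W1 (ts @ [(T,m)]) = W1 ts * (lam T / (Lam lam ts (length ts) + lam T)
     * ((Lam lam ts (length ts) + lam T) / FF (map fst ts @ [T])) ^ (m + 1))"
proof -
  define g where "g = (\<lambda>j. lam (fst ((ts@[(T,m)])!j)) / Lam lam (ts@[(T,m)]) (Suc j)
     * (Lam lam (ts@[(T,m)]) (Suc j) / FF (map fst (take (Suc j) (ts@[(T,m)])))) ^ (snd ((ts@[(T,m)])!j) + 1))"
  have "W1 (ts@[(T,m)]) = prod g {..<Suc (length ts)}" by (simp add: W1_def g_def)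
  also have "\<dots> = prod g {..<length ts} * g (length ts)" by (rule prod.lessThan_Suc)
  also have "prod g {..<length ts} = W1 ts" unfolding W1_def g_def
    by (intro prod.cong) (auto simp: nth_append Lam_snoc)
  also have "g (length ts) = lam T / (Lam lam ts (length ts) + lam T)
     * ((Lam lam ts (length ts) + lam T) / FF (map fst ts @ [T])) ^ (m + 1)"
    using Lam_full[of lam ts "(T,m)"] by (simp add: g_def)
  finally show ?thesis .
qed

lemma fib_Nil: "fib [] = {[]}"
  by (auto simp: fib_def ts_Nil_iff)

lemma fib0:
  assumes "T \<notin> fst ` set ts" "T < K"
  shows "fib (ts @ [(T,0)]) = (\<lambda>xs. xs @ [T]) ` fib ts"
proof
  show "fib (ts @ [(T,0)]) \<subseteq> (\<lambda>xs. xs @ [T]) ` fib ts"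
  proof
    fix ys assume ys: "ys \<in> fib (ts @ [(T,0)])"
    then have ne: "ys \<noteq> []" by (auto simp: fib_def)
    define xs where "xs = butlast ys"
    define c where "c = last ys"
    have e: "ys = xs @ [c]" using ne by (simp add: xs_def c_def)
    have t: "tok_step (token_state xs) c = ts @ [(T,0)]" using ys by (simp add: fib_def e ts_snoc)
    have "c \<notin> fst ` set (token_state xs)"
    proof
      assume "c \<in> fst ` set (token_state xs)"
      then have "last (tok_step (token_state xs) c) = (fst (last (token_state xs)), Suc (snd (last (token_state xs))))"
        by (simp add: tok_step_def)
      then show False using t by simp
    qed
    then have "token_state xs @ [(c,0)] = ts @ [(T,0)]" using t by (simp add: tok_step_def)
    then have "token_state xs = ts" "c = T" by auto
    moreover have "xs \<in> lists {..<K}" using ys by (auto simp: fib_def e)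
    ultimately show "ys \<in> (\<lambda>xs. xs @ [T]) ` fib ts" using e by (auto simp: fib_def)
  qed
next
  show "(\<lambda>xs. xs @ [T]) ` fib ts \<subseteq> fib (ts @ [(T,0)])"
    using assms by (auto simp: fib_def ts_snoc tok_step_def)
qed

lemma fibS:
  assumes "fst ` set (ts @ [(T,m)]) \<subseteq> {..<K}"
  shows "fib (ts @ [(T,Suc m)]) = (\<lambda>(xs,c). xs @ [c]) ` (fib (ts @ [(T,m)]) \<times> fst ` set (ts @ [(T,m)]))"
proof
  show "fib (ts @ [(T,Suc m)]) \<subseteq> (\<lambda>(xs,c). xs @ [c]) ` (fib (ts @ [(T,m)]) \<times> fst ` set (ts @ [(T,m)]))"
  proof
    fix ys assume ys: "ys \<in> fib (ts @ [(T,Suc m)])"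
    then have ne: "ys \<noteq> []" by (auto simp: fib_def)
    define xs where "xs = butlast ys"
    define c where "c = last ys"
    define acc where "acc = token_state xs"
    have e: "ys = xs @ [c]" using ne by (simp add: xs_def c_def)
    have t: "tok_step acc c = ts @ [(T,Suc m)]" using ys by (simp add: fib_def e ts_snoc acc_def)
    have cin: "c \<in> fst ` set acc"
    proof (rule ccontr)
      assume "c \<notin> fst ` set acc"
      then have "acc @ [(c,0)] = ts @ [(T,Suc m)]" using t by (simp add: tok_step_def)
      then show False by simp
    qed
    then have ne2: "acc \<noteq> []" by auto
    have "butlast acc @ [(fst (last acc), Suc (snd (last acc)))] = ts @ [(T,Suc m)]"
      using t cin by (simp add: tok_step_def)
    then have "butlast acc = ts" "fst (last acc) = T" "snd (last acc) = m" by auto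
    then have "acc = ts @ [(T,m)]" using ne2 by (metis append_butlast_last_id prod.collapse)
    moreover have "xs \<in> lists {..<K}" using ys by (auto simp: fib_def e)
    ultimately show "ys \<in> (\<lambda>(xs,c). xs @ [c]) ` (fib (ts @ [(T,m)]) \<times> fst ` set (ts @ [(T,m)]))"
      using e cin by (auto simp: fib_def acc_def)
  qed
next
  show "(\<lambda>(xs,c). xs @ [c]) ` (fib (ts @ [(T,m)]) \<times> fst ` set (ts @ [(T,m)])) \<subseteq> fib (ts @ [(T,Suc m)])"
  proof
    fix z assume "z \<in> (\<lambda>(xs,c). xs @ [c]) ` (fib (ts @ [(T,m)]) \<times> fst ` set (ts @ [(T,m)]))"
    then obtain xs c where z: "z = xs @ [c]" and xs: "xs \<in> fib (ts @ [(T,m)])" and c: "c \<in> fst ` set (ts @ [(T,m)])"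
      by auto
    have "tok_step (ts @ [(T,m)]) c = ts @ [(T, Suc m)]" using c by (simp add: tok_step_def)
    moreover have "c < K" using c assms by auto
    ultimately show "z \<in> fib (ts @ [(T,Suc m)])" using xs z by (auto simp: fib_def ts_snoc)
  qed
qed

lemma Lam_nonneg: "fst ` set ts \<subseteq> {..<K} \<Longrightarrow> Lam lam ts (length ts) \<ge> 0"
  unfolding Lam_def
proof (intro sum_nonneg)
  fix m assume "fst ` set ts \<subseteq> {..<K}" "m \<in> {..<length ts}"
  then have "fst (ts ! m) < K" by (meson image_subset_iff lessThan_iff lessThan_iff nth_mem)
  then show "0 \<le> lam (fst (ts ! m))" using lam_pos less_imp_le by blast
qed

end


context mm begin
lemma fib_main:
  "distinct (map fst ts) \<Longrightarrow> fst ` set ts \<subseteq> {..<K} \<Longrightarrow> finite (fib ts) \<and> sum Q1 (fib ts) = W1 ts"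
proof (induction ts rule: rev_induct)
  case Nil then show ?case by (simp add: fib_Nil W1_def)
next
  case (snoc p ts)
  obtain T m0 where p: "p = (T,m0)" by (cases p)
  have dts: "distinct (map fst ts)" "fst ` set ts \<subseteq> {..<K}" using snoc.prems by auto
  have T: "T \<notin> fst ` set ts" "T < K" using snoc.prems p by auto
  note IH = snoc.IH[OF dts]
  define L where "L = Lam lam ts (length ts) + lam T"
  define F' where "F' = FF (map fst ts @ [T])"
  have Lpos: "L > 0" unfolding L_def using Lam_nonneg[OF dts(2)] lam_pos T by (simp add: add_nonneg_pos)
  have Fpos: "F' > 0" unfolding F'_def using dts T by (intro FF_pos) auto
  have FFx: "FF (xs @ [c]) = F'" if "xs \<in> fib (ts @ [(T,m)])" "c \<in> fst ` set (ts @ [(T,m)])" for xs c m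
  proof -
    have "set xs = fst ` set (ts @ [(T,m)])" using that ts_set[of xs] by (simp add: fib_def)
    then show ?thesis unfolding F'_def using that(2)
      by (intro arg_cong[where f=real] Fnum_set) auto
  qed
  have "finite (fib (ts @ [(T,m)])) \<and> sum Q1 (fib (ts @ [(T,m)])) = W1 (ts @ [(T,m)])" for m
  proof (induction m)
    case 0
    have inj: "inj_on (\<lambda>xs. xs @ [T]) (fib ts)" by (auto intro: inj_onI)
    have "sum Q1 (fib (ts @ [(T,0)])) = (\<Sum>xs\<in>fib ts. Q1 (xs @ [T]))"
      unfolding fib0[OF T] by (simp add: sum.reindex[OF inj])
    also have "\<dots> = (\<Sum>xs\<in>fib ts. Q1 xs * (lam T / F'))"
    proof (rule sum.cong)
      fix xs assume xs: "xs \<in> fib ts"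
      have "set xs = fst ` set ts" using xs ts_set[of xs] by (simp add: fib_def)
      then have "FF (xs @ [T]) = F'" unfolding F'_def by (intro arg_cong[where f=real] Fnum_set) auto
      then show "Q1 (xs @ [T]) = Q1 xs * (lam T / F')" by (simp add: Q1_snoc)
    qed simp
    also have "\<dots> = W1 ts * (lam T / F')" by (subst sum_distrib_right[symmetric]) (use IH in simp)
    also have "\<dots> = W1 (ts @ [(T,0)])"
      using Lpos Fpos by (simp add: W1_snoc L_def[symmetric] F'_def[symmetric])
    finally show ?case using IH fib0[OF T] by simp
  next
    case (Suc m)
    let ?C = "fst ` set (ts @ [(T,m)])"
    have Csub: "?C \<subseteq> {..<K}" using dts T by auto
    have inj: "inj_on (\<lambda>(xs,c). xs @ [c]) (fib (ts @ [(T,m)]) \<times> ?C)" by (auto intro: inj_onI)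
    have fC: "finite ?C" by simp
    have "sum Q1 (fib (ts @ [(T,Suc m)])) = (\<Sum>(xs,c)\<in>fib (ts @ [(T,m)]) \<times> ?C. Q1 (xs @ [c]))"
      unfolding fibS[OF Csub] sum.reindex[OF inj] comp_def by (simp add: split_def)
    also have "\<dots> = (\<Sum>xs\<in>fib (ts @ [(T,m)]). \<Sum>c\<in>?C. Q1 (xs @ [c]))"
      by (simp add: sum.cartesian_product)
    also have "\<dots> = (\<Sum>xs\<in>fib (ts @ [(T,m)]). Q1 xs * (L / F'))"
    proof (rule sum.cong)
      fix xs assume xs: "xs \<in> fib (ts @ [(T,m)])"
      have "(\<Sum>c\<in>?C. Q1 (xs @ [c])) = (\<Sum>c\<in>?C. Q1 xs * lam c / F')"
        by (rule sum.cong) (auto simp: Q1_snoc FFx[OF xs])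
      also have "\<dots> = Q1 xs * (\<Sum>c\<in>?C. lam c) / F'"
        by (simp add: sum_divide_distrib[symmetric] sum_distrib_left)
      also have "(\<Sum>c\<in>?C. lam c) = L"
        using Lam_set[of "ts @ [(T,m)]" lam] Lam_full[of lam ts "(T,m)"] snoc.prems p
        by (simp add: L_def)
      finally show "(\<Sum>c\<in>?C. Q1 (xs @ [c])) = Q1 xs * (L / F')" by simp
    qed simp
    also have "\<dots> = W1 (ts @ [(T,m)]) * (L / F')" by (subst sum_distrib_right[symmetric]) (use Suc.IH in simp)
    also have "\<dots> = W1 (ts @ [(T,Suc m)])"
      by (simp add: W1_snoc L_def[symmetric] F'_def[symmetric])
    finally show ?case using Suc.IH fibS[OF Csub] by simp
  qed
  then show ?case using p by simp
qed

lemma Ap_add: "Ap i * (\<Prod>m\<in>{1..s}. 1 / A (i + m)) = Ap (i + s)"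
proof (induction s)
  case (Suc s)
  then show ?case by (simp add: prod.cl_ivl_Suc Ap_Suc)
qed simp

lemma weight_eq: "weight lam A S cp ts = W1 ts * Ap (length ts + sum_list (map snd ts))"
proof -
  have "(\<Prod>j\<in>{1..length ts}.
        lam (fst (ts ! (j - 1))) / (A j * Lam lam ts j)
        * (Lam lam ts j / real (Fnum S cp (map fst (take j ts)))) ^ (snd (ts ! (j - 1)) + 1))
      = (\<Prod>j<length ts. (lam (fst (ts!j)) / Lam lam ts (Suc j)
        * (Lam lam ts (Suc j) / FF (map fst (take (Suc j) ts))) ^ (snd (ts!j) + 1)) * (1 / A (Suc j)))"
    unfolding One_nat_def prod.atLeast1_atMost_eq
    by (rule prod.cong) (simp_all add: divide_inverse inverse_mult_distrib mult_ac)
  also have "\<dots> = W1 ts * Ap (length ts)"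
    by (simp only: W1_def Ap_def One_nat_def prod.atLeast1_atMost_eq prod.distrib)
  finally show ?thesis unfolding weight_def by (simp add: Ap_add[unfolded One_nat_def] mult.assoc)
qed

lemma fib_qq:
  assumes "ts \<in> token_states K"
  shows "finite (fib ts)" "sum qq (fib ts) = weight lam A S cp ts"
proof -
  have d: "distinct (map fst ts)" "fst ` set ts \<subseteq> {..<K}" using assms by (auto simp: token_states_def)
  note fm = fib_main[OF d]
  show "finite (fib ts)" using fm by simp
  have "sum qq (fib ts) = (\<Sum>xs\<in>fib ts. Q1 xs * Ap (length ts + sum_list (map snd ts)))"
    by (rule sum.cong) (auto simp: qq_def fib_def ts_len)
  also have "\<dots> = weight lam A S cp ts" by (subst sum_distrib_right[symmetric]) (use fm in \<open>simp add: weight_eq\<close>)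
  finally show "sum qq (fib ts) = weight lam A S cp ts" .
qed

end


context mm begin

lemma main_result:
  assumes finite_norm: "weight lam A S cp summable_on token_states K"
  shows "\<exists>p. stationary_dist K lam A S cp p \<and>
           (\<forall>ts \<in> token_states K.
              (\<Sum>xs \<in> {xs \<in> lists {..<K}. token_state xs = ts}. p xs)
              = (1 / infsum (weight lam A S cp) (token_states K))
                * weight lam A S cp ts)"
proof -
  define TS where "TS = token_states K"
  define L where "L = lists {..<K}"
  define Z where "Z = infsum (weight lam A S cp) TS"
  have LU: "L = (\<Union>ts\<in>TS. fib ts)"
  proof
    show "L \<subseteq> (\<Union>ts\<in>TS. fib ts)"
    proof
      fix xs assume xs: "xs \<in> L"
      have "token_state xs \<in> TS" using xs ts_distinct[of xs] ts_set[of xs]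
        by (auto simp: TS_def L_def token_states_def)
      moreover have "xs \<in> fib (token_state xs)" using xs by (simp add: fib_def L_def)
      ultimately show "xs \<in> (\<Union>ts\<in>TS. fib ts)" by blast
    qed
  qed (auto simp: fib_def L_def)
  have disj: "disjoint_family_on fib TS" by (auto simp: disjoint_family_on_def fib_def)
  have hs: "(qq has_sum weight lam A S cp ts) (fib ts)" if "ts \<in> TS" for ts
    using fib_qq[of ts] that has_sum_finite[of "fib ts" qq] by (simp add: TS_def)
  have nn: "qq xs \<ge> 0" if "xs \<in> fib ts" for xs ts
    using that by (intro qq_nonneg) (auto simp: fib_def)
  have summ: "qq summable_on L"
    unfolding LU by (rule summable_on_UnionI[OF hs _ nn disj]) (use finite_norm in \<open>simp_all add: TS_def\<close>)
  have injs: "inj_on snd (Sigma TS fib)" using disj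
    by (intro inj_onI) (auto simp: fib_def)
  have LS: "L = snd ` Sigma TS fib" unfolding LU by force
  have "(qq has_sum infsum qq L) L" using summ by (rule has_sum_infsum)
  then have "((qq \<circ> snd) has_sum infsum qq L) (Sigma TS fib)"
    unfolding LS has_sum_reindex[OF injs] .
  then have "(weight lam A S cp has_sum infsum qq L) TS"
    by (rule has_sum_Sigma') (use hs in \<open>simp add: comp_def\<close>)
  then have ZL: "Z = infsum qq L" unfolding Z_def by (rule infsumI)
  have "infsum qq {[]} \<le> infsum qq L"
    by (rule infsum_mono2) (use summ qq_nonneg in \<open>auto simp: L_def\<close>)
  then have Z1: "Z \<ge> 1" using ZL by simp
  define p where "p = (\<lambda>xs. qq xs / Z)"
  have hp: "(p has_sum 1) L"
    unfolding p_def using has_sum_divide_const[OF has_sum_infsum[OF summ], of Z] ZL Z1 by simp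
  have stat: "stationary_dist K lam A S cp p"
    unfolding stationary_dist_def
  proof (intro conjI)
    show "\<forall>x\<in>lists {..<K}. 0 \<le> p x"
    proof
      fix x assume "x \<in> lists {..<K}"
      then have "qq x \<ge> 0" by (intro qq_nonneg) auto
      then show "0 \<le> p x" using Z1 by (simp add: p_def)
    qed
    show "p summable_on lists {..<K}" using hp by (auto simp: L_def summable_on_def)
    show "infsum p (lists {..<K}) = 1" using hp by (simp add: L_def infsumI)
    show "balance_holds K lam A S cp p"
      unfolding balance_holds_def
    proof
      fix x assume x: "x \<in> lists {..<K}"
      have b: "qq x * ((\<Sum>c<K. lam c) + A (length x) * real (card {s \<in> S. serve cp s x \<noteq> None}))
       = (if x = [] then 0 else qq (butlast x) * lam (last x))
         + (\<Sum>y \<in> {y \<in> lists {..<K}. length y = Suc (length x)}.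
              qq y * A (length y) * real (card {s \<in> S. serve cp s y = Some x}))"
        using x by (intro balance_qq) auto
      have "p x * ((\<Sum>c<K. lam c) + A (length x) * real (card {s \<in> S. serve cp s x \<noteq> None}))
         = (qq x * ((\<Sum>c<K. lam c) + A (length x) * real (card {s \<in> S. serve cp s x \<noteq> None}))) / Z"
        by (simp add: p_def)
      also have "\<dots> = ((if x = [] then 0 else qq (butlast x) * lam (last x))
         + (\<Sum>y \<in> {y \<in> lists {..<K}. length y = Suc (length x)}.
              qq y * A (length y) * real (card {s \<in> S. serve cp s y = Some x}))) / Z"
        by (simp only: b)
      also have "\<dots> = (if x = [] then 0 else p (butlast x) * lam (last x))
         + (\<Sum>y \<in> {y \<in> lists {..<K}. length y = Suc (length x)}.
              p y * A (length y) * real (card {s \<in> S. serve cp s y = Some x}))"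
        by (simp add: p_def add_divide_distrib sum_divide_distrib)
      finally show "p x * ((\<Sum>c<K. lam c) + A (length x) * real (card {s \<in> S. serve cp s x \<noteq> None}))
         = (if x = [] then 0 else p (butlast x) * lam (last x))
         + (\<Sum>y \<in> {y \<in> lists {..<K}. length y = Suc (length x)}.
              p y * A (length y) * real (card {s \<in> S. serve cp s y = Some x}))" .
    qed
  qed
  have "\<forall>ts \<in> token_states K.
              (\<Sum>xs \<in> {xs \<in> lists {..<K}. token_state xs = ts}. p xs)
              = (1 / infsum (weight lam A S cp) (token_states K)) * weight lam A S cp ts"
  proof
    fix ts assume ts: "ts \<in> token_states K"
    have "(\<Sum>xs \<in> {xs \<in> lists {..<K}. token_state xs = ts}. p xs) = sum qq (fib ts) / Z"
      by (simp add: p_def fib_def sum_divide_distrib)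
    also have "\<dots> = (1 / Z) * weight lam A S cp ts" using fib_qq[OF ts] by simp
    finally show "(\<Sum>xs \<in> {xs \<in> lists {..<K}. token_state xs = ts}. p xs)
              = (1 / infsum (weight lam A S cp) (token_states K)) * weight lam A S cp ts"
      by (simp add: Z_def TS_def)
  qed
  with stat show ?thesis by blast
qed

end

theorem mainTheorem12:
  fixes K :: nat and lam :: "nat \<Rightarrow> real" and A :: "nat \<Rightarrow> real"
    and S :: "'s set" and cp :: "'s \<Rightarrow> nat \<Rightarrow> bool"
  assumes finS: "finite S"
    and lam_pos: "\<forall>c<K. lam c > 0"
    and A_pos: "\<forall>n\<ge>1. A n > 0"
    and F_pos: "\<forall>Ts. Ts \<noteq> [] \<and> set Ts \<subseteq> {..<K} \<longrightarrow> Fnum S cp Ts > 0"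
    and finite_norm: "weight lam A S cp summable_on token_states K"
  shows "\<exists>p. stationary_dist K lam A S cp p \<and>
           (\<forall>ts \<in> token_states K.
              (\<Sum>xs \<in> {xs \<in> lists {..<K}. token_state xs = ts}. p xs)
              = (1 / infsum (weight lam A S cp) (token_states K))
                * weight lam A S cp ts)"
proof -
  interpret mm K lam A S cp using assms by unfold_locales auto
  show ?thesis using main_result[OF finite_norm] .
qed


end
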